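(* There is an absolute constant $K>0$ such that the following holds. Let $n,k,m$ be integers and $\delta$ a real number with $1\le m\le k\le n$ and $0<\delta<1$. Let \[ p=\min\Bigl\{\frac{1}{m}\cdot\log_2\frac{m}{\delta}\cdot\ln\frac{Kn}{m},\ \frac12\Bigr\}, \] and let $M$ be a random $m\times n$ matrix over $GF(2)$ whose entries are independent and each equals $1$ with probability $p$. Then for every random variable $X$ on $\{0,1\}^n$ of min-entropy at least $k$, independent of $M$, the statistical distance between $(M, MX)$ and $(M,U_m)$ is at most \[ \tfrac12\sqrt{\delta+K\cdot 2^{-k+m}}, \] where $U_m$ is uniform on $\{0,1\}^m$ and independent of $M$. (That is, $H(x)=Mx$ is a strong extractor family for min-entropy $k$ with this error.)
   Context: The min-entropy of a random variable $X$ is $\min_x \log_2(1/\Pr[X=x])$. The statistical distance between random variables $A,B$ on a finite set $\Omega$ is $\max_{T\subseteq\Omega}|\Pr[A\in T]-\Pr[B\in T]| = \frac12\sum_{\omega}|\Pr[A=\omega]-\Pr[B=\omega]|$. A strong extractor family for min-entropy $k$ with error $\varepsilon$ is a distribution $H$ on functions $\{0,1\}^n\to\{0,1\}^m$ such that for every $X$ of min-entropy at least $k$ (independent of $H$), $(H,H(X))$ and $(H,U_m)$ are within statistical distance $\varepsilon$. *)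

theory Defs
  imports "HOL-Probability.Probability"
begin

text \<open>Bit vectors in {0,1}^n are represented as functions nat => bool that are False
  outside {..<n}; an m x n matrix over GF(2) as a function nat * nat => bool that is
  False outside {..<m} x {..<n}. True = 1, False = 0.\<close>

definition bitvecs :: "nat \<Rightarrow> (nat \<Rightarrow> bool) set" where
  "bitvecs n = {x. \<forall>i. n \<le> i \<longrightarrow> \<not> x i}"

definition gf2_mult :: "nat \<Rightarrow> nat \<Rightarrow> (nat \<times> nat \<Rightarrow> bool) \<Rightarrow> (nat \<Rightarrow> bool) \<Rightarrow> (nat \<Rightarrow> bool)" where
  "gf2_mult m n A x = (\<lambda>i. i < m \<and> odd (card {j \<in> {..<n}. A (i, j) \<and> x j}))"

definition rand_matrix :: "nat \<Rightarrow> nat \<Rightarrow> real \<Rightarrow> (nat \<times> nat \<Rightarrow> bool) pmf" where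
  "rand_matrix m n p = Pi_pmf ({..<m} \<times> {..<n}) False (\<lambda>_. bernoulli_pmf p)"

definition uniform_bits :: "nat \<Rightarrow> (nat \<Rightarrow> bool) pmf" where
  "uniform_bits m = pmf_of_set (bitvecs m)"

definition min_entropy :: "'a pmf \<Rightarrow> real" where
  "min_entropy X = (INF x\<in>set_pmf X. log 2 (1 / pmf X x))"

definition stat_dist :: "'a pmf \<Rightarrow> 'a pmf \<Rightarrow> real" where
  "stat_dist A B = (SUP T. \<bar>measure_pmf.prob A T - measure_pmf.prob B T\<bar>)"

end

theory Submission imports Defs "HOL-Analysis.Harmonic_Numbers" begin


lemma exp_ge_sq: "(x::real) \<ge> 0 \<Longrightarrow> (1 + x/2)^2 \<le> exp x"
  using exp_ge_one_plus_x_over_n_power_n[where x=x and n=2] by simp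

lemma ln_le_2sqrt: "(x::real) > 0 \<Longrightarrow> ln x \<le> 2 * sqrt x"
proof -
  assume x: "x > 0"
  have "ln x = 2 * ln (sqrt x)" using x by (simp add: ln_sqrt)
  also have "\<dots> \<le> 2 * (sqrt x - 1)" using ln_le_minus_one[of "sqrt x"] x by simp
  finally show ?thesis by simp
qed

lemma exp_pow_fact: "(x::real) \<ge> 0 \<Longrightarrow> x ^ d / fact d \<le> exp x"
proof -
  assume x: "x \<ge> 0"
  have "x ^ d / fact d \<le> (\<Sum>n\<le>d. x ^ n / fact n)"
    using x by (intro member_le_sum) auto
  also have "\<dots> \<le> exp x"
    using x summable_exp_generic[of x]
    by (auto simp: exp_def divide_inverse ac_simps intro!: sum_le_suminf)
  finally show ?thesis .
qed

lemma choose_le_exp: 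
  assumes "d \<ge> 1"
  shows "real (n choose d) \<le> exp (real d * (1 + ln (real n) - ln (real d)))"
proof (cases "n = 0")
  case True then show ?thesis using assms by (simp add: binomial_eq_0)
next
  case False
  have f: "fact d > (0::real)" by simp
  have c: "real (n choose d) * fact d \<le> real n ^ d"
    using binomial_fact_pow[of n d] by (metis of_nat_fact of_nat_le_iff of_nat_mult of_nat_power)
  have dd: "real d ^ d \<le> exp (real d) * fact d"
    using exp_pow_fact[of "real d" d] f by (simp add: divide_le_eq)
  have "real (n choose d) \<le> real n ^ d / fact d" using c f by (simp add: le_divide_eq)
  also have "\<dots> \<le> real n ^ d * exp (real d) / real d ^ d"
  proof -
    have "real n ^ d / fact d = real n ^ d * (1 / fact d)" by simp
    also have "1 / fact d \<le> exp (real d) / real d ^ d"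
      using dd f assms by (simp add: divide_simps mult.commute)
    finally show ?thesis using assms by (simp add: mult_left_mono divide_simps)
  qed
  also have "\<dots> = exp (real d * (1 + ln (real n) - ln (real d)))"
  proof -
    have a: "exp (real d * ln (real n)) = real n ^ d"
      using False by (subst exp_of_nat_mult) simp
    have b: "exp (real d * ln (real d)) = real d ^ d"
      using assms by (subst exp_of_nat_mult) simp
    show ?thesis
      by (simp add: exp_diff exp_add distrib_left a b algebra_simps)
  qed
  finally show ?thesis .
qed



lemma exp_neg_le: "(y::real) \<ge> 0 \<Longrightarrow> exp (-y) \<le> 1 / (1 + y/2)^2"
proof -
  assume y: "y \<ge> 0"
  have "(1 + y/2)^2 \<le> exp y" using exp_ge_sq y by simp
  moreover have "(1 + y/2)^2 > 0" using y by simp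
  ultimately show ?thesis by (simp add: exp_minus field_simps)
qed

lemma key_ineq:
  fixes d m n L lam y :: real
  assumes d1: "d \<ge> 1" and m0: "m > 0" and L8: "L \<ge> 8" and lam: "lam \<ge> 128"
    and lnm: "ln m \<le> L" and lnn: "ln n = ln m + lam - 128"
    and y: "y = 2*L*lam*d/m" and ylt: "y < (1+L)*ln 2"
  shows "d*(1 + ln n - ln d) - m*(1 - exp(-y))/2 \<le> - d*ln 2"
proof -
  have l2u: "ln (2::real) \<le> 25/36" by (rule ln2_le_25_over_36)
  have l2l: "ln (2::real) \<ge> 2/3" by (rule ln2_ge_two_thirds)
  have lnd: "ln d \<ge> 0" using d1 by simp
  have ypos: "y > 0" using y d1 m0 L8 lam by simp
  have dlam: "d*lam = y*m/(2*L)" using y L8 m0 by (simp add: field_simps)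
  show ?thesis
  proof (cases "y \<le> 1")
    case True
    have e1: "exp (-y) \<le> 1 / (1 + y)"
      using exp_ge_add_one_self[of y] ypos by (simp add: exp_minus field_simps)
    have e2: "1 / (1 + y) \<le> 1 - y/2"
    proof -
      have "y*y \<le> y*1" using True ypos by (intro mult_left_mono) auto
      then show ?thesis using ypos by (simp add: field_simps power2_eq_square)
    qed
    have A1: "m*(y/2)/2 \<le> m*(1 - exp(-y))/2"
      using e1 e2 m0 by (intro divide_right_mono mult_left_mono) auto
    have A2: "m*(y/2)/2 = d*(L*lam/2)" using y m0 by (simp add: field_simps)
    have A3: "2 + L + lam \<le> L*lam/2"
    proof -
      have "(L/2 - 1)*(lam - 2) \<ge> 3*126" using L8 lam by (intro mult_mono) auto
      then show ?thesis by (simp add: algebra_simps)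
    qed
    have A4: "d*(1 + ln n - ln d) + d*ln 2 \<le> d*(2 + L + lam)"
    proof -
      have "1 + ln n - ln d + ln 2 \<le> 2 + L + lam" using lnn lnm lnd l2u by simp
      then have "d*(1 + ln n - ln d + ln 2) \<le> d*(2 + L + lam)" using d1 by (intro mult_left_mono) auto
      moreover have "d*(1 + ln n - ln d) + d*ln 2 = d*(1 + ln n - ln d + ln 2)" by (simp add: algebra_simps)
      ultimately show ?thesis by simp
    qed
    have A5: "d*(2 + L + lam) \<le> d*(L*lam/2)"
      using A3 d1 by (intro mult_left_mono) auto
    from A4 A5 A2 A1 have "d*(1 + ln n - ln d) + d*ln 2 \<le> m*(1 - exp(-y))/2" by linarith
    then show ?thesis by linarith
  next
    case False
    define E where "E = d*(1 + ln 2 - 128 + ln m - ln d)"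
    have E: "E \<le> m/500"
    proof (cases "ln m - ln d \<le> 126")
      case True
      have "1 + ln 2 - 128 + ln m - ln d \<le> 0" using True l2u by simp
      then have "E \<le> 0" unfolding E_def using d1 by (simp add: mult_nonneg_nonpos)
      then show ?thesis using m0 by simp
    next
      case False
      define r where "r = m/d"
      have r0: "r > 0" using m0 d1 unfolding r_def by simp
      have lnr: "ln r = ln m - ln d" unfolding r_def using m0 d1 by (simp add: ln_div)
      have "ln r > 126" using False lnr by simp
      then have "exp 126 < exp (ln r)" by (simp only: exp_less_cancel_iff)
      then have "r > exp 126" using r0 by simp
      have "exp (126::real) = (exp 63)^2" by (simp add: power2_eq_square flip: exp_add)
      then have "sqrt (exp 126) = exp 63" by simp
      then have sr: "sqrt r \<ge> exp 63" using \<open>r > exp 126\<close> real_sqrt_le_mono[of "exp 126" r] by simp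
      have "exp (63::real) \<ge> (1 + 63/2)^2" using exp_ge_sq[of 63] by simp
      then have sr2: "sqrt r \<ge> 1000" using sr by (simp add: power2_eq_square)
      have mdr: "m = d*r" unfolding r_def using d1 by simp
      have "d * ln r \<le> d * (2 * sqrt r)" using ln_le_2sqrt[OF r0] d1 by (intro mult_left_mono) auto
      also have "d * (2 * sqrt r) = 2*m / sqrt r"
      proof -
        have "r = sqrt r * sqrt r" using r0 by simp
        then have "m = d * sqrt r * sqrt r" using mdr by simp
        then show ?thesis using r0 by (simp add: field_simps)
      qed
      also have "\<dots> \<le> 2*m/1000" using sr2 m0 r0 by (intro divide_left_mono) auto
      finally have "d * ln r \<le> m/500" by simp
      moreover have "d*(1 + ln 2 - 128) \<le> 0" using l2u d1 by (simp add: mult_nonneg_nonpos)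
      ultimately show ?thesis unfolding E_def using lnr by (simp add: algebra_simps)
    qed
    have lhs: "d*(1 + ln n - ln d) + d*ln 2 = y*m/(2*L) + E"
    proof -
      have "d*(1 + ln n - ln d) + d*ln 2 = d*lam + E" unfolding E_def lnn by (simp add: algebra_simps)
      then show ?thesis using dlam by simp
    qed
    have main: "y/L + 1/50 + exp(-y) \<le> 1"
    proof (cases "y \<le> 3")
      case True
      have "exp (-y) \<le> 1/(1+y/2)^2" using exp_neg_le ypos by simp
      also have "\<dots> \<le> 1/(1+1/2)^2" using \<open>\<not> y \<le> 1\<close> by (intro divide_left_mono power_mono) auto
      finally have "exp (-y) \<le> 4/9" by (simp add: power2_eq_square)
      moreover have "y/L \<le> 3/8" 
      proof -
        have "y/L \<le> 3/L" using True L8 by (intro divide_right_mono) auto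
        also have "\<dots> \<le> 3/8" using L8 by (intro divide_left_mono) auto
        finally show ?thesis .
      qed
      ultimately show ?thesis by simp
    next
      case False
      have "exp (-y) \<le> 1/(1+y/2)^2" using exp_neg_le ypos by simp
      also have "\<dots> \<le> 1/(1+3/2)^2" using False by (intro divide_left_mono power_mono) auto
      finally have "exp (-y) \<le> 4/25" by (simp add: power2_eq_square)
      moreover have "y/L \<le> 25/36 * (1 + 1/8)"
      proof -
        have "y/L \<le> (1+L)*ln 2/L" using ylt L8 by (intro divide_right_mono) auto
        also have "\<dots> = ln 2 * (1 + 1/L)" using L8 by (simp add: field_simps)
        also have "\<dots> \<le> 25/36 * (1 + 1/8)" using l2u L8 l2l
          by (intro mult_mono) (auto simp: divide_simps)
        finally show ?thesis .
      qed
      ultimately show ?thesis by simp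
    qed
    have "y*m/(2*L) + E \<le> m*(1 - exp(-y))/2"
    proof -
      have "y*m/(2*L) + E \<le> m*(y/L)/2 + m/500" using E by (simp add: field_simps)
      also have "\<dots> \<le> m*(1 - exp(-y))/2"
      proof -
        have "y/L + 1/250 \<le> 1 - exp(-y)" using main by simp
        then have "m*(y/L + 1/250) \<le> m*(1 - exp(-y))" using m0 by (intro mult_left_mono) auto
        then show ?thesis by (simp add: algebra_simps)
      qed
      finally show ?thesis .
    qed
    then show ?thesis using lhs by linarith
  qed
qed



lemma geom_half: "(\<Sum>d\<in>{1..<Suc t}. (1/2::real)^d) = 1 - (1/2)^t"
  by (induction t) (auto simp: sum.op_ivl_Suc)

lemma geom_half_le: "(\<Sum>d\<in>{1..<t}. (1/2::real)^d) \<le> 1"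
proof (cases t)
  case 0 then show ?thesis by simp
next
  case (Suc k)
  then show ?thesis using geom_half[of k] by simp
qed

lemma core:
  fixes n m :: nat and \<delta> :: real
  assumes m1: "1 \<le> m" and mn: "m \<le> n" and d0: "0 < \<delta>" and d1: "\<delta> < 1"
  defines "p \<equiv> min ((1 / real m) * log 2 (real m / \<delta>) * ln (exp 128 * real n / real m)) (1/2)"
  shows "\<exists>t\<ge>1. (1 + (1-2*p)^t)^m \<le> 1 + \<delta> \<and>
           (\<Sum>d\<in>{1..<t}. real (n choose d) * ((1 + (1-2*p)^d)/2)^m) \<le> 1"
proof -
  define lam where "lam = ln (exp 128 * real n / real m)"
  define L where "L = log 2 (real m / \<delta>)"
  define q where "q = 1 - 2*p"
  have mpos: "real m > 0" using m1 by simp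
  have npos: "real n > 0" using m1 mn by simp
  have lam_eq: "lam = 128 + ln (real n) - ln (real m)"
    unfolding lam_def using mpos npos by (simp add: ln_mult ln_div)
  have "ln (real m) \<le> ln (real n)" using mn mpos by simp
  then have lam128: "lam \<ge> 128" using lam_eq by simp
  have mdel: "real m / \<delta> \<ge> real m" using d0 d1 mpos by (simp add: le_divide_eq)
  have mdel1: "real m / \<delta> > 1" using d0 d1 m1 by (simp add: less_divide_eq)
  have Lpos: "L > 0" unfolding L_def using mdel1 by simp
  have lnmd: "ln (real m / \<delta>) = L * ln 2" unfolding L_def by (simp add: log_def)
  have l2: "ln (2::real) < 1" "ln (2::real) > 0" using ln_2_less_1 by auto
  have p_def': "p = min (L * lam / real m) (1/2)" unfolding p_def L_def lam_def by simp
  show ?thesis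
  proof (cases "L * lam / real m \<ge> 1/2")
    case True
    then have "p = 1/2" unfolding p_def' by simp
    then have q0: "1 - 2*p = 0" by simp
    have "(1 + (1-2*p)^1)^m = 1" unfolding q0 by simp
    then show ?thesis using d0 by (intro exI[of _ 1]) simp
  next
    case False
    then have pe: "p = L * lam / real m" unfolding p_def' by simp
    have ppos: "p > 0" using pe Lpos lam128 mpos by simp
    have phalf: "p < 1/2" using False pe by simp
    show ?thesis
    proof (cases "m = 1")
      case True
      have "L = - ln \<delta> / ln 2" unfolding L_def True by (simp add: log_def ln_div d0)
      moreover have "- ln \<delta> \<ge> 1 - \<delta>" using ln_le_minus_one[OF d0] by simp
      moreover have "- ln \<delta> / ln 2 \<ge> - ln \<delta>"
      proof -
        have "- ln \<delta> \<ge> 0" using d0 d1 by simp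
        then have "- ln \<delta> * ln 2 \<le> - ln \<delta> * 1" using l2 by (intro mult_left_mono) auto
        then have "ln \<delta> \<le> ln \<delta> * ln 2" by simp
        then have "ln \<delta> / ln 2 \<le> ln \<delta>" using pos_divide_le_eq[OF l2(2)] by simp
        then show ?thesis by simp
      qed
      ultimately have L1d: "L \<ge> 1 - \<delta>" by linarith
      have "(1 - \<delta>) * 128 \<le> L * lam" using L1d lam128 d1 Lpos by (intro mult_mono) auto
      then have "p \<ge> 128 * (1 - \<delta>)" using pe True by (simp add: algebra_simps)
      then have "(1 + (1-2*p)^1)^m \<le> 1 + \<delta>" using True d1 by simp
      then show ?thesis by (intro exI[of _ 1]) simp
    next
      case False
      then have m2: "real m \<ge> 2" using m1 by simp
      have Lm: "L \<ge> log 2 (real m)" unfolding L_def using mdel mpos by simp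
      have "log 2 (real m) \<ge> log 2 2" using m2 by simp
      then have L1: "L \<ge> 1" using Lm by simp
      have "2 * L * lam < real m" using phalf pe mpos by (simp add: field_simps)
      moreover have "2 * L * lam \<ge> 2 * 1 * 128" using L1 lam128 by (intro mult_mono) auto
      ultimately have "real m > 256" by simp
      then have "log 2 (real m) \<ge> log 2 256" by simp
      moreover have "log 2 (256::real) = 8"
      proof -
        have "(256::real) = 2 ^ 8" by simp
        then show ?thesis using log_pow_cancel[of "2::real" 8] by simp
      qed
      ultimately have L8: "L \<ge> 8" using Lm by simp
      have lnm: "ln (real m) \<le> L"
      proof -
        have "ln (real m) \<ge> 0" using m2 by simp
        then have "ln (real m) * ln 2 \<le> ln (real m) * 1" using l2 by (intro mult_left_mono) auto
        then have "ln (real m) \<le> ln (real m) / ln 2" using pos_le_divide_eq[OF l2(2)] by simp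
        then show ?thesis using Lm by (simp add: log_def)
      qed
      have lnn: "ln (real n) = ln (real m) + lam - 128" using lam_eq by simp
      have q0: "q > 0" "q < 1" unfolding q_def using ppos phalf by auto
      have qexp: "q \<le> exp (-2*p)" unfolding q_def using exp_ge_add_one_self[of "-2*p"] by simp
      define z where "z = ln (2 * real m / \<delta>) / (2*p)"
      have ln2md: "ln (2 * real m / \<delta>) = (1 + L) * ln 2"
        using lnmd mpos d0 by (simp add: ln_mult ln_div algebra_simps)
      have zpos: "z > 0" unfolding z_def ln2md using Lpos l2 ppos by simp
      define t where "t = nat \<lceil>z\<rceil>"
      have tz: "real t \<ge> z" unfolding t_def by linarith
      have t1: "t \<ge> 1" unfolding t_def using zpos by linarith
      have qd: "q ^ d \<le> exp (- (2*p*d))" for d :: nat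
      proof -
        have "q ^ d \<le> exp (-2*p) ^ d" using q0 qexp by (intro power_mono) auto
        also have "\<dots> = exp (- (2*p*d))" by (simp add: exp_of_nat_mult[symmetric] algebra_simps)
        finally show ?thesis .
      qed
      have A: "(1 + q^t)^m \<le> 1 + \<delta>"
      proof -
        have "q^t \<le> exp (- (2*p*t))" by (rule qd)
        also have "\<dots> \<le> exp (- (2*p*z))" using tz ppos by simp
        also have "2*p*z = ln (2 * real m / \<delta>)" unfolding z_def using ppos by simp
        also have "exp (- ln (2 * real m / \<delta>)) = \<delta> / (2 * real m)"
          using mpos d0 by (simp add: exp_minus)
        finally have qt: "q^t \<le> \<delta> / (2 * real m)" .
        have "(1 + q^t)^m \<le> exp (q^t) ^ m" using q0 by (intro power_mono) auto
        also have "\<dots> = exp (real m * q^t)" by (simp add: exp_of_nat_mult)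
        also have "\<dots> \<le> exp (\<delta>/2)" using qt mpos by (simp add: field_simps)
        also have "\<dots> \<le> 1 + \<delta>" using exp_bound_lemma[of "\<delta>/2"] d0 d1 by simp
        finally show ?thesis .
      qed
      have B: "real (n choose d) * ((1 + q^d)/2)^m \<le> (1/2)^d" if d: "d \<in> {1..<t}" for d
      proof -
        have "int d < \<lceil>z\<rceil>" using d unfolding t_def by auto
        then have "real_of_int (int d) < z" by (simp only: less_ceiling_iff)
        then have dt: "real d < z" by simp
        define y where "y = 2*L*lam*real d/real m"
        have ye: "y = 2*p*d" unfolding y_def pe by simp
        have ylt: "y < (1+L) * ln 2"
        proof -
          have "y < 2*p*z" unfolding ye using dt ppos by simp
          also have "2*p*z = (1+L) * ln 2" unfolding z_def ln2md using ppos by simp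
          finally show ?thesis .
        qed
        have d1': "real d \<ge> 1" using d by simp
        have K: "real d*(1 + ln (real n) - ln (real d)) - real m*(1 - exp(-y))/2 \<le> - real d*ln 2"
          by (rule key_ineq[OF d1' mpos L8 lam128 lnm lnn y_def ylt])
        have c: "real (n choose d) \<le> exp (real d * (1 + ln (real n) - ln (real d)))"
          using choose_le_exp d by simp
        have "(1 + q^d)/2 \<le> exp (- (1 - exp (-y))/2)"
        proof -
          have "(1 + q^d)/2 \<le> 1 + (- (1 - exp (-y))/2)" using qd[of d] ye by (simp add: field_simps)
          also have "\<dots> \<le> exp (- (1 - exp (-y))/2)" by (rule exp_ge_add_one_self)
          finally show ?thesis .
        qed
        then have "((1 + q^d)/2)^m \<le> exp (- (1 - exp (-y))/2) ^ m"
          using q0 by (intro power_mono) auto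
        also have "\<dots> = exp (- real m * (1 - exp (-y))/2)" by (simp add: exp_of_nat_mult[symmetric] algebra_simps)
        finally have e: "((1 + q^d)/2)^m \<le> exp (- real m * (1 - exp (-y))/2)" .
        have "real (n choose d) * ((1 + q^d)/2)^m \<le>
              exp (real d * (1 + ln (real n) - ln (real d))) * exp (- real m * (1 - exp (-y))/2)"
          using c e q0 by (intro mult_mono) auto
        also have "\<dots> = exp (real d * (1 + ln (real n) - ln (real d)) - real m * (1 - exp (-y))/2)"
          by (simp add: exp_add[symmetric])
        also have "\<dots> \<le> exp (- real d * ln 2)" using K by simp
        also have "\<dots> = (1/2)^d"
        proof -
          have "exp (real d * ln 2) = 2 ^ d" by (subst exp_of_nat_mult) simp
          then show ?thesis by (simp add: exp_minus inverse_eq_divide power_one_over)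
        qed
        finally show ?thesis .
      qed
      have "(\<Sum>d\<in>{1..<t}. real (n choose d) * ((1 + q^d)/2)^m) \<le> (\<Sum>d\<in>{1..<t}. (1/2::real)^d)"
        by (intro sum_mono B)
      also have "\<dots> \<le> 1" by (rule geom_half_le)
      finally show ?thesis using A t1 unfolding q_def by blast
    qed
  qed
qed



lemma fin_set_Pi_bern: "finite D \<Longrightarrow> finite (set_pmf (Pi_pmf D False (\<lambda>_. bernoulli_pmf p)))"
  by (subst set_Pi_pmf) (auto intro!: finite_PiE_dflt)

lemma exp_prod_bern:
  fixes D :: "'a set" and f :: "'a \<Rightarrow> bool \<Rightarrow> real"
  assumes D: "finite D" and p: "0 \<le> p" "p \<le> 1"
  shows "measure_pmf.expectation (Pi_pmf D False (\<lambda>_. bernoulli_pmf p)) (\<lambda>M. \<Prod>\<omega>\<in>D. f \<omega> (M \<omega>))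
         = (\<Prod>\<omega>\<in>D. f \<omega> True * p + f \<omega> False * (1 - p))"
proof -
  let ?P = "Pi_pmf D False (\<lambda>_. bernoulli_pmf p)"
  have ind: "prob_space.indep_vars (measure_pmf ?P) (\<lambda>_. count_space UNIV) (\<lambda>\<omega> M. M \<omega>) D"
    using indep_vars_Pi_pmf[OF D, of False "\<lambda>_. bernoulli_pmf p"] by simp
  have ind2: "prob_space.indep_vars (measure_pmf ?P) (\<lambda>_. borel) (\<lambda>\<omega> M. f \<omega> (M \<omega>)) D"
    by (rule prob_space.indep_vars_compose2[OF measure_pmf.prob_space_axioms ind]) auto
  have fin: "finite (set_pmf ?P)" by (rule fin_set_Pi_bern[OF D])
  have "measure_pmf.expectation ?P (\<lambda>M. \<Prod>\<omega>\<in>D. f \<omega> (M \<omega>))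
        = (\<Prod>\<omega>\<in>D. measure_pmf.expectation ?P (\<lambda>M. f \<omega> (M \<omega>)))"
    by (rule prob_space.indep_vars_lebesgue_integral[OF measure_pmf.prob_space_axioms D ind2]) (rule integrable_measure_pmf_finite[OF fin])
  also have "\<dots> = (\<Prod>\<omega>\<in>D. f \<omega> True * p + f \<omega> False * (1 - p))"
  proof (rule prod.cong[OF refl])
    fix \<omega> assume w: "\<omega> \<in> D"
    have "measure_pmf.expectation ?P (\<lambda>M. f \<omega> (M \<omega>))
          = measure_pmf.expectation (map_pmf (\<lambda>M. M \<omega>) ?P) (f \<omega>)" by simp
    also have "map_pmf (\<lambda>M. M \<omega>) ?P = bernoulli_pmf p"
      using Pi_pmf_component[OF D, of \<omega> False "\<lambda>_. bernoulli_pmf p"] w by simp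
    finally show "measure_pmf.expectation ?P (\<lambda>M. f \<omega> (M \<omega>)) = f \<omega> True * p + f \<omega> False * (1 - p)"
      using p by simp
  qed
  finally show ?thesis .
qed



lemma prod_sign: "finite S \<Longrightarrow> (\<Prod>j\<in>S. if P j then -1 else (1::real)) = (-1) ^ card {j\<in>S. P j}"
proof -
  assume S: "finite S"
  have "(\<Prod>j\<in>S. if P j then -1 else (1::real)) = (\<Prod>j\<in>S \<inter> {j. P j}. -1) * (\<Prod>j\<in>S \<inter> - {j. P j}. 1)"
    by (rule prod.If_cases[OF S])
  also have "\<dots> = (-1) ^ card (S \<inter> {j. P j})" by simp
  also have "S \<inter> {j. P j} = {j\<in>S. P j}" by auto
  finally show ?thesis .
qed

lemma half_sign: "(1 + (-1::real) ^ c) / 2 = (if even c then 1 else 0)"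
  by (simp add: minus_one_power_iff)

lemma prod_01: "(\<Prod>i\<in>A. if Q i then 1 else (0::real)) = (if \<forall>i\<in>A. Q i then 1 else 0)" if "finite A"
proof (cases "\<forall>i\<in>A. Q i")
  case True then show ?thesis by simp
next
  case False
  then obtain i where "i \<in> A" "\<not> Q i" by blast
  then show ?thesis using that by (auto intro!: prod_zero)
qed

lemma prob_even_rows:
  fixes S :: "nat set"
  assumes S: "S \<subseteq> {..<n}" and p: "0 \<le> p" "p \<le> 1"
  shows "measure_pmf.prob (rand_matrix m n p) {M. \<forall>i<m. even (card {j\<in>S. M (i, j)})}
         = ((1 + (1 - 2*p) ^ card S) / 2) ^ m"
proof -
  define D where "D = {..<m} \<times> {..<n}"
  define s :: "bool \<Rightarrow> real" where "s b = (if b then -1 else 1)" for b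
  define g where "g I \<omega> b = (if \<omega> \<in> I \<times> S then s b else 1)" for I :: "nat set" and \<omega> :: "nat \<times> nat" and b
  define q where "q = 1 - 2*p"
  let ?P = "Pi_pmf D False (\<lambda>_. bernoulli_pmf p)"
  have finS: "finite S" using S finite_subset by blast
  have finD: "finite D" unfolding D_def by simp
  have rm: "rand_matrix m n p = ?P" unfolding rand_matrix_def D_def ..
  have ind: "indicator {M. \<forall>i<m. even (card {j\<in>S. M (i, j)})} M
            = (1/2)^m * (\<Sum>I\<in>Pow {..<m}. \<Prod>\<omega>\<in>D. g I \<omega> (M \<omega>))" for M :: "nat \<times> nat \<Rightarrow> bool"
  proof -
    have "indicator {M. \<forall>i<m. even (card {j\<in>S. M (i, j)})} M
          = (\<Prod>i\<in>{..<m}. if even (card {j\<in>S. M (i, j)}) then 1 else (0::real))"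
      by (subst prod_01) (auto simp: indicator_def)
    also have "\<dots> = (\<Prod>i\<in>{..<m}. (1 + (\<Prod>j\<in>S. s (M (i,j)))) / 2)"
      by (intro prod.cong refl) (simp add: s_def prod_sign[OF finS] half_sign)
    also have "\<dots> = (\<Prod>i\<in>{..<m}. 1 + (\<Prod>j\<in>S. s (M (i,j)))) / 2^m"
      by (simp add: prod_dividef)
    also have "\<dots> = (1/2)^m * (\<Prod>i\<in>{..<m}. (\<Prod>j\<in>S. s (M (i,j))) + 1)"
      by (simp add: power_one_over add.commute)
    also have "(\<Prod>i\<in>{..<m}. (\<Prod>j\<in>S. s (M (i,j))) + 1)
               = (\<Sum>I\<in>Pow {..<m}. (\<Prod>i\<in>I. \<Prod>j\<in>S. s (M (i,j))) * (\<Prod>i\<in>{..<m} - I. 1))"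
      by (rule prod_add) simp
    also have "\<dots> = (\<Sum>I\<in>Pow {..<m}. \<Prod>\<omega>\<in>D. g I \<omega> (M \<omega>))"
    proof (intro sum.cong refl)
      fix I assume I: "I \<in> Pow {..<m}"
      have finI: "finite I" using I finite_subset by auto
      have "(\<Prod>i\<in>I. \<Prod>j\<in>S. s (M (i,j))) = (\<Prod>\<omega>\<in>I \<times> S. s (M \<omega>))"
        by (simp add: prod.cartesian_product)
      also have "\<dots> = (\<Prod>\<omega>\<in>D. g I \<omega> (M \<omega>))"
      proof -
        have "(\<Prod>\<omega>\<in>D. g I \<omega> (M \<omega>)) = (\<Prod>\<omega>\<in>D \<inter> {\<omega>. \<omega> \<in> I \<times> S}. s (M \<omega>)) * (\<Prod>\<omega>\<in>D \<inter> - {\<omega>. \<omega> \<in> I \<times> S}. 1)"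
          unfolding g_def by (rule prod.If_cases[OF finD])
        also have "D \<inter> {\<omega>. \<omega> \<in> I \<times> S} = I \<times> S" using I S unfolding D_def by auto
        finally show ?thesis by simp
      qed
      finally show "(\<Prod>i\<in>I. \<Prod>j\<in>S. s (M (i,j))) * (\<Prod>i\<in>{..<m} - I. 1) = (\<Prod>\<omega>\<in>D. g I \<omega> (M \<omega>))"
        by simp
    qed
    finally show ?thesis .
  qed
  have "measure_pmf.prob (rand_matrix m n p) {M. \<forall>i<m. even (card {j\<in>S. M (i, j)})}
        = measure_pmf.expectation ?P (indicator {M. \<forall>i<m. even (card {j\<in>S. M (i, j)})})"
    unfolding rm by simp
  also have "\<dots> = measure_pmf.expectation ?P (\<lambda>M. (1/2)^m * (\<Sum>I\<in>Pow {..<m}. \<Prod>\<omega>\<in>D. g I \<omega> (M \<omega>)))"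
    by (intro Bochner_Integration.integral_cong refl) (rule ind)
  also have "\<dots> = (1/2)^m * (\<Sum>I\<in>Pow {..<m}. measure_pmf.expectation ?P (\<lambda>M. \<Prod>\<omega>\<in>D. g I \<omega> (M \<omega>)))"
    using fin_set_Pi_bern[OF finD]
    by (simp add: integrable_measure_pmf_finite)
  also have "\<dots> = (1/2)^m * (\<Sum>I\<in>Pow {..<m}. \<Prod>\<omega>\<in>D. g I \<omega> True * p + g I \<omega> False * (1 - p))"
    by (simp only: exp_prod_bern[OF finD p])
  also have "\<dots> = (1/2)^m * (\<Sum>I\<in>Pow {..<m}. \<Prod>i\<in>I. q ^ card S)"
  proof -
    have "(\<Prod>\<omega>\<in>D. g I \<omega> True * p + g I \<omega> False * (1 - p)) = (\<Prod>i\<in>I. q ^ card S)" if I: "I \<in> Pow {..<m}" for I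
    proof -
      have finI: "finite I" using I finite_subset by auto
      have "(\<Prod>\<omega>\<in>D. g I \<omega> True * p + g I \<omega> False * (1 - p)) = (\<Prod>\<omega>\<in>D. if \<omega> \<in> I \<times> S then q else 1)"
        by (intro prod.cong refl) (simp add: g_def s_def q_def algebra_simps)
      also have "\<dots> = (\<Prod>\<omega>\<in>D \<inter> {\<omega>. \<omega> \<in> I \<times> S}. q) * (\<Prod>\<omega>\<in>D \<inter> - {\<omega>. \<omega> \<in> I \<times> S}. 1)"
        by (rule prod.If_cases[OF finD])
      also have "D \<inter> {\<omega>. \<omega> \<in> I \<times> S} = I \<times> S" using I S unfolding D_def by auto
      also have "(\<Prod>\<omega>\<in>I \<times> S. q) * (\<Prod>\<omega>\<in>D \<inter> - {\<omega>. \<omega> \<in> I \<times> S}. 1) = q ^ (card I * card S)"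
        by (simp add: card_cartesian_product)
      also have "\<dots> = (\<Prod>i\<in>I. q ^ card S)" by (simp add: power_mult[symmetric] mult.commute)
      finally show ?thesis .
    qed
    then show ?thesis by (intro arg_cong[where f="\<lambda>x. (1/2)^m * x"] sum.cong refl) auto
  qed
  also have "(\<Sum>I\<in>Pow {..<m}. \<Prod>i\<in>I. q ^ card S) = (\<Prod>i\<in>{..<m}. q ^ card S + 1)"
    by (subst prod_add) simp_all
  also have "(1/2)^m * (\<Prod>i\<in>{..<m}. q ^ card S + 1) = ((1 + q ^ card S)/2)^m"
    by (simp add: power_divide add.commute)
  finally show ?thesis unfolding q_def .
qed



lemma sd_chi:
  fixes A B :: "'a pmf"
  assumes fin: "finite (set_pmf B)" and sub: "set_pmf A \<subseteq> set_pmf B"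
  shows "stat_dist A B \<le> 1/2 * sqrt ((\<Sum>\<omega>\<in>set_pmf B. (pmf A \<omega>)^2 / pmf B \<omega>) - 1)"
proof -
  let ?\<Omega> = "set_pmf B"
  define a where "a = pmf A"
  define b where "b = pmf B"
  have bpos: "b \<omega> > 0" if "\<omega> \<in> ?\<Omega>" for \<omega> using that unfolding b_def by (simp add: pmf_positive)
  have sa: "(\<Sum>\<omega>\<in>?\<Omega>. a \<omega>) = 1" unfolding a_def by (rule sum_pmf_eq_1[OF fin sub])
  have sb: "(\<Sum>\<omega>\<in>?\<Omega>. b \<omega>) = 1" unfolding b_def by (rule sum_pmf_eq_1[OF fin]) simp
  define R where "R = (\<Sum>\<omega>\<in>?\<Omega>. (a \<omega> - b \<omega>)^2 / b \<omega>)"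
  have R_eq: "R = (\<Sum>\<omega>\<in>?\<Omega>. (pmf A \<omega>)^2 / pmf B \<omega>) - 1"
  proof -
    have "R = (\<Sum>\<omega>\<in>?\<Omega>. (a \<omega>)^2 / b \<omega> - 2 * a \<omega> + b \<omega>)"
      unfolding R_def using bpos
      by (intro sum.cong refl) (auto simp: field_simps power2_eq_square dest!: bpos)
    also have "\<dots> = (\<Sum>\<omega>\<in>?\<Omega>. (a \<omega>)^2 / b \<omega>) - 2 * (\<Sum>\<omega>\<in>?\<Omega>. a \<omega>) + (\<Sum>\<omega>\<in>?\<Omega>. b \<omega>)"
      by (simp add: sum.distrib sum_subtractf sum_distrib_left)
    finally show ?thesis using sa sb unfolding a_def b_def by simp
  qed
  have L1: "(\<Sum>\<omega>\<in>?\<Omega>. \<bar>a \<omega> - b \<omega>\<bar>) \<le> sqrt R"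
  proof -
    have "(\<Sum>\<omega>\<in>?\<Omega>. \<bar>a \<omega> - b \<omega>\<bar>) = (\<Sum>\<omega>\<in>?\<Omega>. sqrt (b \<omega>) * (\<bar>a \<omega> - b \<omega>\<bar> / sqrt (b \<omega>)))"
      using bpos by (intro sum.cong refl) (auto dest!: bpos)
    also have "\<dots> \<le> sqrt ((\<Sum>\<omega>\<in>?\<Omega>. (sqrt (b \<omega>))^2) * (\<Sum>\<omega>\<in>?\<Omega>. (\<bar>a \<omega> - b \<omega>\<bar> / sqrt (b \<omega>))^2))"
      by (rule real_le_rsqrt) (rule Cauchy_Schwarz_ineq_sum)
    also have "(\<Sum>\<omega>\<in>?\<Omega>. (sqrt (b \<omega>))^2) = 1" using sb bpos by (simp add: less_imp_le)
    also have "(\<Sum>\<omega>\<in>?\<Omega>. (\<bar>a \<omega> - b \<omega>\<bar> / sqrt (b \<omega>))^2) = R"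
      unfolding R_def using bpos by (intro sum.cong refl) (auto simp: power_divide less_imp_le dest!: bpos)
    finally show ?thesis by simp
  qed
  have T: "\<bar>measure_pmf.prob A T - measure_pmf.prob B T\<bar> \<le> 1/2 * sqrt R" for T
  proof -
    have pa: "measure_pmf.prob A T = (\<Sum>\<omega>\<in>T \<inter> ?\<Omega>. a \<omega>)"
    proof -
      have "measure_pmf.prob A T = measure_pmf.prob A (T \<inter> set_pmf A)" by (simp add: measure_Int_set_pmf)
      also have "T \<inter> set_pmf A = (T \<inter> ?\<Omega>) \<inter> set_pmf A" using sub by auto
      also have "measure_pmf.prob A \<dots> = measure_pmf.prob A (T \<inter> ?\<Omega>)" by (simp add: measure_Int_set_pmf)
      also have "\<dots> = (\<Sum>\<omega>\<in>T \<inter> ?\<Omega>. a \<omega>)" unfolding a_def using fin by (simp add: measure_measure_pmf_finite)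
      finally show ?thesis .
    qed
    have pb: "measure_pmf.prob B T = (\<Sum>\<omega>\<in>T \<inter> ?\<Omega>. b \<omega>)"
    proof -
      have "measure_pmf.prob B T = measure_pmf.prob B (T \<inter> ?\<Omega>)" by (simp add: measure_Int_set_pmf)
      also have "\<dots> = (\<Sum>\<omega>\<in>T \<inter> ?\<Omega>. b \<omega>)" unfolding b_def using fin by (simp add: measure_measure_pmf_finite)
      finally show ?thesis .
    qed
    define u where "u = (\<Sum>\<omega>\<in>T \<inter> ?\<Omega>. a \<omega> - b \<omega>)"
    define v where "v = (\<Sum>\<omega>\<in>?\<Omega> - T. a \<omega> - b \<omega>)"
    have uv: "u + v = 0"
    proof -
      have "u + v = (\<Sum>\<omega>\<in>?\<Omega>. a \<omega> - b \<omega>)"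
        unfolding u_def v_def using fin
        by (subst sum.union_disjoint[symmetric]) (auto intro: sum.cong)
      also have "\<dots> = 0" using sa sb by (simp add: sum_subtractf)
      finally show ?thesis .
    qed
    have u1: "\<bar>u\<bar> \<le> (\<Sum>\<omega>\<in>T \<inter> ?\<Omega>. \<bar>a \<omega> - b \<omega>\<bar>)" unfolding u_def by (rule sum_abs)
    have v1: "\<bar>v\<bar> \<le> (\<Sum>\<omega>\<in>?\<Omega> - T. \<bar>a \<omega> - b \<omega>\<bar>)" unfolding v_def by (rule sum_abs)
    have "(\<Sum>\<omega>\<in>T \<inter> ?\<Omega>. \<bar>a \<omega> - b \<omega>\<bar>) + (\<Sum>\<omega>\<in>?\<Omega> - T. \<bar>a \<omega> - b \<omega>\<bar>) = (\<Sum>\<omega>\<in>?\<Omega>. \<bar>a \<omega> - b \<omega>\<bar>)"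
      using fin by (subst sum.union_disjoint[symmetric]) (auto intro: sum.cong)
    then have "2 * \<bar>u\<bar> \<le> sqrt R" using u1 v1 uv L1 by linarith
    moreover have "measure_pmf.prob A T - measure_pmf.prob B T = u"
      unfolding pa pb u_def by (simp add: sum_subtractf)
    ultimately show ?thesis by simp
  qed
  have "stat_dist A B \<le> 1/2 * sqrt R"
    unfolding stat_dist_def by (intro cSUP_least T) simp
  then show ?thesis using R_eq by simp
qed



lemma pmf_A:
  fixes \<mu> :: "'m pmf" and X :: "'x pmf" and g :: "'m \<Rightarrow> 'x \<Rightarrow> 'y"
  shows "pmf (map_pmf (\<lambda>(M,x). (M, g M x)) (pair_pmf \<mu> X)) (M, y)
         = pmf \<mu> M * pmf (map_pmf (g M) X) y"
proof -
  let ?h = "\<lambda>(M,x). (M, g M x)"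
  let ?C = "g M -` {y}"
  have pre: "?h -` {(M, y)} = {M} \<times> ?C" by auto
  have "pmf (map_pmf ?h (pair_pmf \<mu> X)) (M, y) = measure_pmf.prob (pair_pmf \<mu> X) ({M} \<times> ?C)"
    by (simp add: pmf_map pre)
  also have "\<dots> = measure_pmf.prob (pair_pmf \<mu> X) (({M} \<times> ?C) \<inter> set_pmf (pair_pmf \<mu> X))"
    by (rule measure_Int_set_pmf[symmetric])
  also have "({M} \<times> ?C) \<inter> set_pmf (pair_pmf \<mu> X) = ({M} \<times> (?C \<inter> set_pmf X)) \<inter> set_pmf (pair_pmf \<mu> X)"
    by auto
  also have "measure_pmf.prob (pair_pmf \<mu> X) \<dots> = measure_pmf.prob (pair_pmf \<mu> X) ({M} \<times> (?C \<inter> set_pmf X))"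
    by (rule measure_Int_set_pmf)
  also have "\<dots> = measure_pmf.prob \<mu> {M} * measure_pmf.prob X (?C \<inter> set_pmf X)"
    by (rule measure_pmf_prob_product) (auto intro: countable_subset[OF _ countable_set_pmf])
  also have "measure_pmf.prob X (?C \<inter> set_pmf X) = measure_pmf.prob X ?C"
    by (simp add: measure_Int_set_pmf)
  also have "\<dots> = pmf (map_pmf (g M) X) y" by (simp add: pmf_map)
  finally show ?thesis by (simp add: measure_pmf_single)
qed

lemma measure_as_sum:
  assumes "finite Bn" "set_pmf X \<subseteq> Bn"
  shows "measure_pmf.prob X S = (\<Sum>x\<in>Bn. pmf X x * (if x \<in> S then 1 else 0))"
proof -
  have "measure_pmf.prob X S = measure_pmf.expectation X (indicator S)" by simp
  also have "\<dots> = (\<Sum>x\<in>Bn. indicator S x * pmf X x)"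
    by (rule integral_measure_pmf_real) (use assms in auto)
  finally show ?thesis by (simp add: indicator_def of_bool_def mult.commute)
qed

lemma chi_eq:
  fixes \<mu> :: "'m pmf" and X :: "'x pmf" and g :: "'m \<Rightarrow> 'x \<Rightarrow> 'y"
  assumes fin\<mu>: "finite (set_pmf \<mu>)" and finY: "finite Y" and Yne: "Y \<noteq> {}"
    and finX: "finite Bn" and subX: "set_pmf X \<subseteq> Bn" and gY: "\<And>M x. g M x \<in> Y"
  shows "(\<Sum>\<omega>\<in>set_pmf (pair_pmf \<mu> (pmf_of_set Y)).
            (pmf (map_pmf (\<lambda>(M,x). (M, g M x)) (pair_pmf \<mu> X)) \<omega>)^2 / pmf (pair_pmf \<mu> (pmf_of_set Y)) \<omega>)
         = real (card Y) * (\<Sum>x\<in>Bn. \<Sum>x'\<in>Bn. pmf X x * pmf X x' * measure_pmf.prob \<mu> {M. g M x = g M x'})"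
proof -
  define D where "D M y = pmf (map_pmf (g M) X) y" for M y
  have cY: "real (card Y) > 0" using finY Yne by (simp add: card_gt_0_iff)
  have sumD: "(\<Sum>y\<in>Y. (D M y)^2) = (\<Sum>x\<in>Bn. \<Sum>x'\<in>Bn. pmf X x * pmf X x' * (if g M x = g M x' then 1 else 0))" for M
  proof -
    have "(\<Sum>y\<in>Y. (D M y)^2) = (\<Sum>y\<in>Y. D M y * pmf (map_pmf (g M) X) y)"
      unfolding D_def by (simp add: power2_eq_square)
    also have "\<dots> = measure_pmf.expectation (map_pmf (g M) X) (D M)"
      by (rule integral_measure_pmf_real[symmetric]) (use finY gY in auto)
    also have "\<dots> = measure_pmf.expectation X (\<lambda>x. D M (g M x))" by simp
    also have "\<dots> = (\<Sum>x\<in>Bn. D M (g M x) * pmf X x)"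
      by (rule integral_measure_pmf_real) (use finX subX in auto)
    also have "\<dots> = (\<Sum>x\<in>Bn. \<Sum>x'\<in>Bn. pmf X x * pmf X x' * (if g M x = g M x' then 1 else 0))"
    proof (intro sum.cong refl)
      fix x assume "x \<in> Bn"
      have "D M (g M x) = measure_pmf.prob X {x'. g M x' = g M x}"
        unfolding D_def by (simp add: pmf_map vimage_def)
      also have "\<dots> = (\<Sum>x'\<in>Bn. pmf X x' * (if x' \<in> {x'. g M x' = g M x} then 1 else 0))"
        by (rule measure_as_sum[OF finX subX])
      finally show "D M (g M x) * pmf X x = (\<Sum>x'\<in>Bn. pmf X x * pmf X x' * (if g M x = g M x' then 1 else 0))"
        by (simp add: sum_distrib_right sum_distrib_left algebra_simps eq_commute)
    qed
    finally show ?thesis .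
  qed
  have "(\<Sum>\<omega>\<in>set_pmf (pair_pmf \<mu> (pmf_of_set Y)).
            (pmf (map_pmf (\<lambda>(M,x). (M, g M x)) (pair_pmf \<mu> X)) \<omega>)^2 / pmf (pair_pmf \<mu> (pmf_of_set Y)) \<omega>)
        = (\<Sum>M\<in>set_pmf \<mu>. \<Sum>y\<in>Y. (pmf \<mu> M * D M y)^2 / (pmf \<mu> M / real (card Y)))"
  proof -
    have e: "set_pmf (pair_pmf \<mu> (pmf_of_set Y)) = set_pmf \<mu> \<times> Y" using finY Yne by simp
    have pY: "pmf (pmf_of_set Y) b = 1 / real (card Y)" if "b \<in> Y" for b using finY Yne that by simp
    show ?thesis unfolding e sum.cartesian_product
      by (intro sum.cong refl) (use finY Yne in \<open>auto simp: pmf_A pmf_pair D_def pY\<close>)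
  qed
  also have "\<dots> = (\<Sum>M\<in>set_pmf \<mu>. pmf \<mu> M * real (card Y) * (\<Sum>y\<in>Y. (D M y)^2))"
  proof (intro sum.cong refl)
    fix M assume M: "M \<in> set_pmf \<mu>"
    then have "pmf \<mu> M > 0" by (simp add: pmf_positive)
    then show "(\<Sum>y\<in>Y. (pmf \<mu> M * D M y)^2 / (pmf \<mu> M / real (card Y))) = pmf \<mu> M * real (card Y) * (\<Sum>y\<in>Y. (D M y)^2)"
      using cY by (simp add: sum_distrib_left power2_eq_square field_simps)
  qed
  also have "\<dots> = real (card Y) * (\<Sum>x\<in>Bn. \<Sum>x'\<in>Bn. pmf X x * pmf X x' *
                    (\<Sum>M\<in>set_pmf \<mu>. pmf \<mu> M * (if g M x = g M x' then 1 else 0)))"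
    unfolding sumD
    by (simp add: sum_distrib_left sum_distrib_right algebra_simps sum.swap[of _ "set_pmf \<mu>"])
  also have "\<dots> = real (card Y) * (\<Sum>x\<in>Bn. \<Sum>x'\<in>Bn. pmf X x * pmf X x' * measure_pmf.prob \<mu> {M. g M x = g M x'})"
    by (simp add: measure_as_sum[OF fin\<mu> order_refl])
  finally show ?thesis .
qed



lemma parity_sym_diff:
  assumes "finite A" "finite B"
  shows "even (card A + card B) \<longleftrightarrow> even (card ((A - B) \<union> (B - A)))"
proof -
  have "A = (A - B) \<union> (A \<inter> B)" by auto
  moreover have "card ((A - B) \<union> (A \<inter> B)) = card (A - B) + card (A \<inter> B)"
    using assms by (intro card_Un_disjoint) auto
  ultimately have a: "card A = card (A - B) + card (A \<inter> B)" by simp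
  have "B = (B - A) \<union> (A \<inter> B)" by auto
  moreover have "card ((B - A) \<union> (A \<inter> B)) = card (B - A) + card (A \<inter> B)"
    using assms by (intro card_Un_disjoint) auto
  ultimately have b: "card B = card (B - A) + card (A \<inter> B)" by simp
  have c: "card ((A - B) \<union> (B - A)) = card (A - B) + card (B - A)"
    using assms by (intro card_Un_disjoint) auto
  show ?thesis unfolding a b c by presburger
qed

lemma gf2_eq_iff:
  "gf2_mult m n M x = gf2_mult m n M x' \<longleftrightarrow>
     (\<forall>i<m. even (card {j\<in>{j\<in>{..<n}. x j \<noteq> x' j}. M (i,j)}))"
proof -
  have key: "(odd (card {j \<in> {..<n}. M (i, j) \<and> x j}) \<longleftrightarrow> odd (card {j \<in> {..<n}. M (i, j) \<and> x' j}))
             \<longleftrightarrow> even (card {j\<in>{j\<in>{..<n}. x j \<noteq> x' j}. M (i,j)})" for i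
  proof -
    let ?A = "{j \<in> {..<n}. M (i, j) \<and> x j}" and ?B = "{j \<in> {..<n}. M (i, j) \<and> x' j}"
    have "(?A - ?B) \<union> (?B - ?A) = {j\<in>{j\<in>{..<n}. x j \<noteq> x' j}. M (i,j)}" by auto
    moreover have "even (card ?A + card ?B) \<longleftrightarrow> even (card ((?A - ?B) \<union> (?B - ?A)))"
      by (rule parity_sym_diff) auto
    ultimately show ?thesis by auto
  qed
  show ?thesis unfolding gf2_mult_def fun_eq_iff using key by auto
qed

lemma bitvecs_finite: "finite (bitvecs n)"
proof -
  have "bitvecs n = PiE_dflt {..<n} False (\<lambda>_. UNIV)"
    unfolding bitvecs_def PiE_dflt_def by auto
  then show ?thesis by (auto intro!: finite_PiE_dflt)
qed

lemma bitvecs_card: "card (bitvecs n) = 2 ^ n"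
proof -
  have "bitvecs n = PiE_dflt {..<n} False (\<lambda>_. UNIV)"
    unfolding bitvecs_def PiE_dflt_def by auto
  then show ?thesis by (simp add: card_PiE_dflt)
qed

lemma gf2_in_bitvecs: "gf2_mult m n M x \<in> bitvecs m"
  unfolding gf2_mult_def bitvecs_def by auto

lemma sum_bitvecs_dist:
  assumes x: "x \<in> bitvecs n"
  shows "(\<Sum>x'\<in>bitvecs n. \<phi> (card {j\<in>{..<n}. x j \<noteq> x' j})) = (\<Sum>S\<in>Pow {..<n}. \<phi> (card S))"
proof (rule sum.reindex_bij_witness[of _ "\<lambda>S j. j < n \<and> (x j \<noteq> (j \<in> S))" "\<lambda>x'. {j\<in>{..<n}. x j \<noteq> x' j}"])
  fix S assume "S \<in> Pow {..<n}"
  then show "{j \<in> {..<n}. x j \<noteq> (j < n \<and> (x j \<noteq> (j \<in> S)))} = S" by auto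
next
  fix S assume "S \<in> Pow {..<n}"
  show "(\<lambda>j. j < n \<and> (x j \<noteq> (j \<in> S))) \<in> bitvecs n" unfolding bitvecs_def by auto
next
  fix x' assume x': "x' \<in> bitvecs n"
  show "(\<lambda>j. j < n \<and> (x j \<noteq> (j \<in> {j \<in> {..<n}. x j \<noteq> x' j}))) = x'"
  proof (rule ext)
    fix j
    show "(j < n \<and> (x j \<noteq> (j \<in> {j \<in> {..<n}. x j \<noteq> x' j}))) = x' j"
    proof (cases "j < n")
      case True then show ?thesis by auto
    next
      case False then show ?thesis using x' unfolding bitvecs_def by auto
    qed
  qed
next
  fix x' assume "x' \<in> bitvecs n"
  show "{j \<in> {..<n}. x j \<noteq> x' j} \<in> Pow {..<n}" by auto
next
  fix x' assume "x' \<in> bitvecs n"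
  show "\<phi> (card {j \<in> {..<n}. x j \<noteq> x' j}) = \<phi> (card {j \<in> {..<n}. x j \<noteq> x' j})" by simp
qed

lemma sum_Pow_card:
  fixes \<phi> :: "nat \<Rightarrow> real"
  shows "(\<Sum>S\<in>Pow {..<n}. \<phi> (card S)) = (\<Sum>d\<le>n. real (n choose d) * \<phi> d)"
proof -
  have fin: "finite (Pow {..<n::nat})" by simp
  have img: "card ` Pow {..<n} = {..n}"
  proof
    show "card ` Pow {..<n} \<subseteq> {..n}" by (auto dest: card_mono[rotated] simp: subset_eq)
  next
    show "{..n} \<subseteq> card ` Pow {..<n}"
    proof
      fix d assume "d \<in> {..n}"
      then have "{..<d} \<in> Pow {..<n}" "card {..<d} = d" by auto
      then show "d \<in> card ` Pow {..<n}" by (metis image_eqI)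
    qed
  qed
  have "(\<Sum>S\<in>Pow {..<n}. \<phi> (card S)) = (\<Sum>d\<in>card ` Pow {..<n}. \<Sum>S\<in>{S\<in>Pow {..<n}. card S = d}. \<phi> (card S))"
    by (rule sum.image_gen[OF fin])
  also have "\<dots> = (\<Sum>d\<le>n. real (n choose d) * \<phi> d)"
  proof (unfold img, intro sum.cong refl)
    fix d assume "d \<in> {..n}"
    have "(\<Sum>S\<in>{S\<in>Pow {..<n}. card S = d}. \<phi> (card S)) = (\<Sum>S\<in>{S\<in>Pow {..<n}. card S = d}. \<phi> d)"
      by (intro sum.cong) auto
    also have "\<dots> = real (card {S\<in>Pow {..<n}. card S = d}) * \<phi> d" by simp
    also have "card {S\<in>Pow {..<n}. card S = d} = n choose d"
    proof -
      have "{S\<in>Pow {..<n}. card S = d} = {S. S \<subseteq> {..<n} \<and> card S = d}" by auto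
      then show ?thesis using n_subsets[of "{..<n::nat}" d] by simp
    qed
    finally show "(\<Sum>S\<in>{S\<in>Pow {..<n}. card S = d}. \<phi> (card S)) = real (n choose d) * \<phi> d" .
  qed
  finally show ?thesis .
qed



lemma count_bound:
  fixes c q :: real
  assumes x: "x \<in> bitvecs n" and c: "c \<ge> 0" and q: "0 \<le> q"
  shows "(\<Sum>x'\<in>bitvecs n. (if 1 \<le> card {j\<in>{..<n}. x j \<noteq> x' j} \<and> card {j\<in>{..<n}. x j \<noteq> x' j} < t
            then c * (1 + q ^ card {j\<in>{..<n}. x j \<noteq> x' j})^m else 0))
         \<le> (\<Sum>d\<in>{1..<t}. real (n choose d) * (c * (1 + q^d)^m))"
proof -
  define \<phi> where "\<phi> d = (if 1 \<le> d \<and> d < t then c * (1 + q^d)^m else 0)" for d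
  have "(\<Sum>x'\<in>bitvecs n. (if 1 \<le> card {j\<in>{..<n}. x j \<noteq> x' j} \<and> card {j\<in>{..<n}. x j \<noteq> x' j} < t
            then c * (1 + q ^ card {j\<in>{..<n}. x j \<noteq> x' j})^m else 0))
        = (\<Sum>x'\<in>bitvecs n. \<phi> (card {j\<in>{..<n}. x j \<noteq> x' j}))" unfolding \<phi>_def ..
  also have "\<dots> = (\<Sum>S\<in>Pow {..<n}. \<phi> (card S))" by (rule sum_bitvecs_dist[OF x])
  also have "\<dots> = (\<Sum>d\<le>n. real (n choose d) * \<phi> d)" by (rule sum_Pow_card)
  also have "\<dots> = (\<Sum>d\<in>{..n}. if d \<in> {1..<t} then real (n choose d) * (c * (1 + q^d)^m) else 0)"
    unfolding \<phi>_def by (intro sum.cong refl) auto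
  also have "\<dots> = (\<Sum>d\<in>{..n} \<inter> {1..<t}. real (n choose d) * (c * (1 + q^d)^m))"
    by (simp add: sum.inter_restrict)
  also have "\<dots> \<le> (\<Sum>d\<in>{1..<t}. real (n choose d) * (c * (1 + q^d)^m))"
    using c q by (intro sum_mono2) auto
  finally show ?thesis .
qed

lemma hd_zero:
  assumes "x \<in> bitvecs n" "x' \<in> bitvecs n" "card {j\<in>{..<n}. x j \<noteq> x' j} = 0"
  shows "x' = x"
proof (rule ext)
  fix j
  have "{j\<in>{..<n}. x j \<noteq> x' j} = {}" using assms(3) by simp
  then show "x' j = x j" using assms(1,2) unfolding bitvecs_def
    by (cases "j < n") auto
qed

lemma comb_bound:
  fixes X :: "(nat \<Rightarrow> bool) pmf" and q \<delta> :: real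
  assumes sub: "set_pmf X \<subseteq> bitvecs n"
    and Pk: "\<And>x. pmf X x \<le> 2 powr (- real k)"
    and q: "0 \<le> q" "q \<le> 1"
    and Ft: "(1 + q^t)^m \<le> 1 + \<delta>"
    and Bt: "(\<Sum>d\<in>{1..<t}. real (n choose d) * ((1 + q^d)/2)^m) \<le> 1"
  shows "(\<Sum>x\<in>bitvecs n. \<Sum>x'\<in>bitvecs n. pmf X x * pmf X x' * (1 + q ^ card {j\<in>{..<n}. x j \<noteq> x' j})^m)
         \<le> 2 * 2 powr (real m - real k) + 1 + \<delta>"
proof -
  let ?B = "bitvecs n"
  let ?c = "2 powr (- real k)"
  define hd where "hd x x' = card {j\<in>{..<n}. x j \<noteq> x' j}" for x x' :: "nat \<Rightarrow> bool"
  have finB: "finite ?B" by (rule bitvecs_finite)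
  have sP: "(\<Sum>x\<in>?B. pmf X x) = 1" by (rule sum_pmf_eq_1[OF finB sub])
  have Csum: "(\<Sum>d\<in>{1..<t}. real (n choose d) * (?c * (1 + q^d)^m)) \<le> ?c * 2^m"
  proof -
    have "(\<Sum>d\<in>{1..<t}. real (n choose d) * (?c * (1 + q^d)^m))
          = ?c * 2^m * (\<Sum>d\<in>{1..<t}. real (n choose d) * ((1 + q^d)/2)^m)"
      by (simp add: sum_distrib_left power_divide algebra_simps)
    also have "\<dots> \<le> ?c * 2^m * 1" using Bt by (intro mult_left_mono) auto
    finally show ?thesis by simp
  qed
  have inner: "(\<Sum>x'\<in>?B. pmf X x' * (1 + q ^ hd x x')^m) \<le> pmf X x * 2^m + (1 + \<delta>) + ?c * 2^m"
    if x: "x \<in> ?B" for x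
  proof -
    have pw: "pmf X x' * (1 + q ^ hd x x')^m \<le> (if x' = x then pmf X x * 2^m else 0)
               + (if 1 \<le> hd x x' \<and> hd x x' < t then ?c * (1 + q ^ hd x x')^m else 0)
               + pmf X x' * (1 + q^t)^m" if x': "x' \<in> ?B" for x'
    proof (cases "hd x x' = 0")
      case True
      then have "x' = x" using hd_zero[OF x x'] unfolding hd_def by simp
      then show ?thesis using True q by simp
    next
      case False
      show ?thesis
      proof (cases "hd x x' < t")
        case True
        have "pmf X x' * (1 + q ^ hd x x')^m \<le> ?c * (1 + q ^ hd x x')^m"
          using Pk q by (intro mult_right_mono) auto
        moreover have "0 \<le> (if x' = x then pmf X x * 2^m else (0::real))" by simp
        moreover have "0 \<le> pmf X x' * (1 + q^t)^m" using q by simp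
        moreover have "(if 1 \<le> hd x x' \<and> hd x x' < t then ?c * (1 + q ^ hd x x')^m else 0)
                       = ?c * (1 + q ^ hd x x')^m" using True False by simp
        ultimately show ?thesis by linarith
      next
        case nt: False
        have "q ^ hd x x' \<le> q ^ t" using nt q by (intro power_decreasing) auto
        then have "(1 + q ^ hd x x')^m \<le> (1 + q^t)^m" using q by (intro power_mono) auto
        then have "pmf X x' * (1 + q ^ hd x x')^m \<le> pmf X x' * (1 + q^t)^m"
          by (intro mult_left_mono) auto
        moreover have "0 \<le> (if x' = x then pmf X x * 2^m else (0::real))" by simp
        moreover have "(if 1 \<le> hd x x' \<and> hd x x' < t then ?c * (1 + q ^ hd x x')^m else 0) = 0"
          using nt by simp
        ultimately show ?thesis by linarith
      qed
    qed
    have "(\<Sum>x'\<in>?B. pmf X x' * (1 + q ^ hd x x')^m)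
          \<le> (\<Sum>x'\<in>?B. (if x' = x then pmf X x * 2^m else 0)
               + (if 1 \<le> hd x x' \<and> hd x x' < t then ?c * (1 + q ^ hd x x')^m else 0)
               + pmf X x' * (1 + q^t)^m)"
      by (intro sum_mono pw)
    also have "\<dots> = (\<Sum>x'\<in>?B. (if x' = x then pmf X x * 2^m else 0))
               + (\<Sum>x'\<in>?B. (if 1 \<le> hd x x' \<and> hd x x' < t then ?c * (1 + q ^ hd x x')^m else 0))
               + (\<Sum>x'\<in>?B. pmf X x') * (1 + q^t)^m"
      by (simp add: sum.distrib sum_distrib_right)
    also have "(\<Sum>x'\<in>?B. (if x' = x then pmf X x * 2^m else 0)) = pmf X x * 2^m"
      using x finB by (simp add: sum.delta')
    also have "(\<Sum>x'\<in>?B. (if 1 \<le> hd x x' \<and> hd x x' < t then ?c * (1 + q ^ hd x x')^m else 0))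
               \<le> ?c * 2^m"
      using count_bound[OF x _ q(1), of ?c t m] Csum unfolding hd_def by simp
    also have "(\<Sum>x'\<in>?B. pmf X x') * (1 + q^t)^m \<le> 1 + \<delta>" using sP Ft by simp
    finally show ?thesis by simp
  qed
  have "(\<Sum>x\<in>?B. \<Sum>x'\<in>?B. pmf X x * pmf X x' * (1 + q ^ hd x x')^m)
        = (\<Sum>x\<in>?B. pmf X x * (\<Sum>x'\<in>?B. pmf X x' * (1 + q ^ hd x x')^m))"
    by (simp add: sum_distrib_left mult.assoc)
  also have "\<dots> \<le> (\<Sum>x\<in>?B. pmf X x * (pmf X x * 2^m + (1 + \<delta>) + ?c * 2^m))"
    by (intro sum_mono mult_left_mono inner) auto
  also have "\<dots> = 2^m * (\<Sum>x\<in>?B. pmf X x * pmf X x) + (1 + \<delta> + ?c * 2^m) * (\<Sum>x\<in>?B. pmf X x)"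
    by (simp add: sum.distrib sum_distrib_left sum_distrib_right algebra_simps)
  also have "(\<Sum>x\<in>?B. pmf X x * pmf X x) \<le> (\<Sum>x\<in>?B. pmf X x * ?c)"
    by (intro sum_mono mult_left_mono Pk) auto
  also have "(\<Sum>x\<in>?B. pmf X x * ?c) = ?c" using sP by (simp add: sum_distrib_right[symmetric])
  finally have fin1: "(\<Sum>x\<in>?B. \<Sum>x'\<in>?B. pmf X x * pmf X x' * (1 + q ^ hd x x')^m)
     \<le> 2^m * ?c + (1 + \<delta> + ?c * 2^m) * (\<Sum>x\<in>?B. pmf X x)" by simp
  have cm: "?c * 2^m = 2 powr (real m - real k)"
    by (simp add: powr_diff powr_realpow powr_minus divide_inverse)
  have cm2: "2^m * ?c = 2 powr (real m - real k)" using cm by (simp add: mult.commute)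
  show ?thesis using fin1 unfolding hd_def sP cm cm2 by simp
qed



lemma pmf_le_minent:
  assumes sub: "set_pmf X \<subseteq> bitvecs n" and me: "min_entropy X \<ge> real k"
  shows "pmf X x \<le> 2 powr (- real k)"
proof (cases "x \<in> set_pmf X")
  case False then show ?thesis by (simp add: set_pmf_iff)
next
  case True
  have fin: "finite (set_pmf X)" using sub bitvecs_finite finite_subset by blast
  have P: "pmf X x > 0" using True by (simp add: pmf_positive)
  have "real k \<le> log 2 (1 / pmf X x)"
  proof -
    have "min_entropy X \<le> log 2 (1 / pmf X x)"
      unfolding min_entropy_def
      by (rule cINF_lower[OF _ True]) (use fin in \<open>auto intro: bdd_below_finite\<close>)
    then show ?thesis using me by simp
  qed
  then have "2 powr real k \<le> 1 / pmf X x" using P by (simp add: le_log_iff)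
  then have "pmf X x * 2 powr real k \<le> 1" using P by (simp add: le_divide_eq mult.commute)
  then show ?thesis using P by (simp add: powr_minus divide_simps mult.commute)
qed

theorem theorem1:
  "\<exists>K::real. K > 0 \<and>
     (\<forall>(n::nat) (k::nat) (m::nat) (\<delta>::real) (X :: (nat \<Rightarrow> bool) pmf).
        1 \<le> m \<longrightarrow> m \<le> k \<longrightarrow> k \<le> n \<longrightarrow> 0 < \<delta> \<longrightarrow> \<delta> < 1 \<longrightarrow>
        set_pmf X \<subseteq> bitvecs n \<longrightarrow> min_entropy X \<ge> real k \<longrightarrow>
        (let p = min ((1 / real m) * log 2 (real m / \<delta>) * ln (K * real n / real m)) (1/2);
             Mdist = rand_matrix m n p
         in stat_dist (map_pmf (\<lambda>(A, x). (A, gf2_mult m n A x)) (pair_pmf Mdist X))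
                      (pair_pmf Mdist (uniform_bits m))
            \<le> 1/2 * sqrt (\<delta> + K * 2 powr (real m - real k))))"
proof (intro exI[of _ "exp 128"] conjI allI impI)
  show "(0::real) < exp 128" by simp
  fix n k m :: nat and \<delta> :: real and X :: "(nat \<Rightarrow> bool) pmf"
  assume m1: "1 \<le> m" and mk: "m \<le> k" and kn: "k \<le> n" and d0: "0 < \<delta>" and d1: "\<delta> < 1"
    and sub: "set_pmf X \<subseteq> bitvecs n" and me: "min_entropy X \<ge> real k"
  define p where "p = min ((1 / real m) * log 2 (real m / \<delta>) * ln (exp 128 * real n / real m)) (1/2)"
  define \<mu> where "\<mu> = rand_matrix m n p"
  define q where "q = 1 - 2*p"
  have mn: "m \<le> n" using mk kn by simp
  have mpos: "real m > 0" using m1 by simp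
  have ppos: "p > 0"
  proof -
    have "real m / \<delta> > 1" using d0 d1 m1 by (simp add: less_divide_eq)
    then have "log 2 (real m / \<delta>) > 0" by simp
    moreover have "ln (exp 128 * real n / real m) > 0"
    proof -
      have "real n / real m \<ge> 1" using mn mpos by simp
      then have "exp 128 * 1 \<le> exp 128 * (real n / real m)" by (intro mult_left_mono) auto
      then have "exp 128 * real n / real m \<ge> exp 128 * 1" by simp
      moreover have "exp (128::real) > 1" by simp
      ultimately have "exp 128 * real n / real m > 1" by linarith
      then show ?thesis by (rule ln_gt_zero)
    qed
    ultimately show ?thesis unfolding p_def using mpos by simp
  qed
  have phalf: "p \<le> 1/2" unfolding p_def by (rule min.cobounded2)
  have q01: "0 \<le> q" "q \<le> 1" unfolding q_def using ppos phalf by auto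
  obtain t where t1: "t \<ge> 1" and Ft: "(1 + q^t)^m \<le> 1 + \<delta>"
    and Bt: "(\<Sum>d\<in>{1..<t}. real (n choose d) * ((1 + q^d)/2)^m) \<le> 1"
    using core[OF m1 mn d0 d1] unfolding p_def[symmetric] q_def by blast
  have Pk: "\<And>x. pmf X x \<le> 2 powr (- real k)" using pmf_le_minent[OF sub me] .
  let ?A = "map_pmf (\<lambda>(A, x). (A, gf2_mult m n A x)) (pair_pmf \<mu> X)"
  let ?B = "pair_pmf \<mu> (uniform_bits m)"
  have finmu: "finite (set_pmf \<mu>)" unfolding \<mu>_def rand_matrix_def by (rule fin_set_Pi_bern) simp
  have bne: "bitvecs m \<noteq> {}" unfolding bitvecs_def by auto
  have setB: "set_pmf ?B = set_pmf \<mu> \<times> bitvecs m"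
    unfolding uniform_bits_def using bne bitvecs_finite by simp
  have finB: "finite (set_pmf ?B)" using setB finmu bitvecs_finite by simp
  have subAB: "set_pmf ?A \<subseteq> set_pmf ?B" unfolding setB using gf2_in_bitvecs by auto
  have sd: "stat_dist ?A ?B \<le> 1/2 * sqrt ((\<Sum>\<omega>\<in>set_pmf ?B. (pmf ?A \<omega>)^2 / pmf ?B \<omega>) - 1)"
    by (rule sd_chi[OF finB subAB])
  have prob: "measure_pmf.prob \<mu> {M. gf2_mult m n M x = gf2_mult m n M x'}
              = ((1 + q ^ card {j\<in>{..<n}. x j \<noteq> x' j}) / 2) ^ m" for x x' :: "nat \<Rightarrow> bool"
  proof -
    have "{M. gf2_mult m n M x = gf2_mult m n M x'}
          = {M. \<forall>i<m. even (card {j\<in>{j\<in>{..<n}. x j \<noteq> x' j}. M (i,j)})}"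
      by (simp add: gf2_eq_iff)
    moreover have "measure_pmf.prob \<mu> {M. \<forall>i<m. even (card {j\<in>{j\<in>{..<n}. x j \<noteq> x' j}. M (i,j)})}
       = ((1 + (1 - 2*p) ^ card {j\<in>{..<n}. x j \<noteq> x' j}) / 2) ^ m"
      unfolding \<mu>_def by (rule prob_even_rows) (use ppos phalf in auto)
    ultimately show ?thesis unfolding q_def by simp
  qed
  have "(\<Sum>\<omega>\<in>set_pmf ?B. (pmf ?A \<omega>)^2 / pmf ?B \<omega>)
        = real (card (bitvecs m)) * (\<Sum>x\<in>bitvecs n. \<Sum>x'\<in>bitvecs n. pmf X x * pmf X x' *
             measure_pmf.prob \<mu> {M. gf2_mult m n M x = gf2_mult m n M x'})"
    unfolding uniform_bits_def
    by (rule chi_eq[OF finmu bitvecs_finite bne bitvecs_finite sub gf2_in_bitvecs])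
  also have "\<dots> = (\<Sum>x\<in>bitvecs n. \<Sum>x'\<in>bitvecs n. pmf X x * pmf X x' *
                    (1 + q ^ card {j\<in>{..<n}. x j \<noteq> x' j})^m)"
    unfolding prob bitvecs_card
    by (simp add: sum_distrib_left power_divide algebra_simps)
  also have "\<dots> \<le> 2 * 2 powr (real m - real k) + 1 + \<delta>"
    by (rule comb_bound[OF sub Pk q01 Ft Bt])
  finally have S: "(\<Sum>\<omega>\<in>set_pmf ?B. (pmf ?A \<omega>)^2 / pmf ?B \<omega>) - 1 \<le> \<delta> + exp 128 * 2 powr (real m - real k)"
  proof -
    assume "(\<Sum>\<omega>\<in>set_pmf ?B. (pmf ?A \<omega>)^2 / pmf ?B \<omega>) \<le> 2 * 2 powr (real m - real k) + 1 + \<delta>"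
    moreover have "2 * 2 powr (real m - real k) \<le> exp 128 * 2 powr (real m - real k)"
    proof (rule mult_right_mono)
      have "(2::real) \<le> 1 + 128" by simp
      also have "\<dots> \<le> exp 128" by (rule exp_ge_add_one_self)
      finally show "(2::real) \<le> exp 128" .
    qed simp
    ultimately show ?thesis by linarith
  qed
  have "stat_dist ?A ?B \<le> 1/2 * sqrt (\<delta> + exp 128 * 2 powr (real m - real k))"
    using sd S by (meson order_trans mult_left_mono real_sqrt_le_mono zero_le_divide_1_iff zero_le_numeral)
  then show "let p = min ((1 / real m) * log 2 (real m / \<delta>) * ln (exp 128 * real n / real m)) (1/2);
             Mdist = rand_matrix m n p
         in stat_dist (map_pmf (\<lambda>(A, x). (A, gf2_mult m n A x)) (pair_pmf Mdist X))
                      (pair_pmf Mdist (uniform_bits m))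
            \<le> 1/2 * sqrt (\<delta> + exp 128 * 2 powr (real m - real k))"
    unfolding Let_def p_def[symmetric] \<mu>_def[symmetric] .
qed

end
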